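(* Let $\mu\in\mathbb{C}$ with $\mu\notin\frac12\mathbb{Z}$ or $\mu\in\mathbb{Z}$, and let $(\widetilde{L_{1,\mu}}^1,\cdot,[\cdot,\cdot])$ be a transposed Poisson algebra structure on the Lie algebra $\widetilde{L_{1,\mu}}^1$. Then there exist complex numbers $\alpha_t,\beta_t$ ($t\in\mathbb{Z}$) such that the commutative associative multiplication is given by $L_m\cdot L_n=\sum_{t\in\mathbb{Z}}\alpha_tM_{m+n+t}+\sum_{t\in\mathbb{Z}}\beta_tY_{m+n+t+\frac12}$, $L_m\cdot Y_{n+\frac12}=\sum_{t\in\mathbb{Z}}\beta_tM_{m+n+t+1}$ for all $m,n\in\mathbb{Z}$, with all remaining products of basis elements (up to commutativity) equal to zero.
   Context: For $\mu\in\mathbb{C}$, $\widetilde{L_{1,\mu}}^1$ is the complex Lie algebra with basis $\{L_n,M_n,Y_{n+\frac12},C_L\mid n\in\mathbb{Z}\}$, $C_L$ central, and nonzero brackets $[L_m,L_n]=(n-m)L_{m+n}+\frac{m^3-m}{12}\delta_{m+n,0}C_L$, $[L_m,M_n]=(n-m+2\mu)M_{m+n}$, $[L_m,Y_{n+\frac12}]=(n+\frac12-m+\mu)Y_{m+n+\frac12}$, $[Y_{m+\frac12},Y_{n+\frac12}]=(n-m)M_{m+n+1}$. A transposed Poisson algebra structure on a Lie algebra $(L,[\cdot,\cdot])$ is a commutative associative multiplication $\cdot$ on $L$ such that $2z\cdot[x,y]=[z\cdot x,y]+[x,z\cdot y]$ for all $x,y,z\in L$. The sums are understood as elements of the algebra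 (finitely many nonzero terms). *)

theory Defs
  imports Complex_Main
begin

text \<open>Basis of the Lie algebra: LB m = L_m, MB m = M_m, YB n = Y_{n+1/2}, CB = C_L.
  Elements of the algebra are finitely supported coefficient functions.\<close>

datatype basis = LB int | MB int | YB int | CB

type_synonym vec = "basis \<Rightarrow> complex"

definition supp :: "vec \<Rightarrow> basis set" where
  "supp x = {b. x b \<noteq> 0}"

definition Alg :: "vec set" where
  "Alg = {x. finite (supp x)}"

definition e :: "basis \<Rightarrow> vec" where
  "e b = (\<lambda>c. if c = b then 1 else 0)"

fun brb :: "complex \<Rightarrow> basis \<Rightarrow> basis \<Rightarrow> vec" where
  "brb \<mu> (LB m) (LB n) =
     (\<lambda>c. of_int (n - m) * e (LB (m + n)) c
        + (if m + n = 0 then (of_int m ^ 3 - of_int m) / 12 else 0) * e CB c)"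
| "brb \<mu> (LB m) (MB n) = (\<lambda>c. (of_int (n - m) + 2 * \<mu>) * e (MB (m + n)) c)"
| "brb \<mu> (MB n) (LB m) = (\<lambda>c. - (of_int (n - m) + 2 * \<mu>) * e (MB (m + n)) c)"
| "brb \<mu> (LB m) (YB n) = (\<lambda>c. (of_int n + 1/2 - of_int m + \<mu>) * e (YB (m + n)) c)"
| "brb \<mu> (YB n) (LB m) = (\<lambda>c. - (of_int n + 1/2 - of_int m + \<mu>) * e (YB (m + n)) c)"
| "brb \<mu> (YB m) (YB n) = (\<lambda>c. of_int (n - m) * e (MB (m + n + 1)) c)"
| "brb \<mu> _ _ = (\<lambda>c. 0)"

definition lie :: "complex \<Rightarrow> vec \<Rightarrow> vec \<Rightarrow> vec" where
  "lie \<mu> x y = (\<lambda>c. \<Sum>a\<in>supp x. \<Sum>b\<in>supp y. x a * y b * brb \<mu> a b c)"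

definition transposed_poisson :: "complex \<Rightarrow> (vec \<Rightarrow> vec \<Rightarrow> vec) \<Rightarrow> bool" where
  "transposed_poisson \<mu> mul \<longleftrightarrow>
     (\<forall>x\<in>Alg. \<forall>y\<in>Alg. mul x y \<in> Alg) \<and>
     (\<forall>x\<in>Alg. \<forall>y\<in>Alg. \<forall>z\<in>Alg. mul (\<lambda>b. x b + y b) z = (\<lambda>b. mul x z b + mul y z b)) \<and>
     (\<forall>x\<in>Alg. \<forall>y\<in>Alg. \<forall>z\<in>Alg. mul x (\<lambda>b. y b + z b) = (\<lambda>b. mul x y b + mul x z b)) \<and>
     (\<forall>c::complex. \<forall>x\<in>Alg. \<forall>y\<in>Alg. mul (\<lambda>b. c * x b) y = (\<lambda>b. c * mul x y b)) \<and>
     (\<forall>c::complex. \<forall>x\<in>Alg. \<forall>y\<in>Alg. mul x (\<lambda>b. c * y b) = (\<lambda>b. c * mul x y b)) \<and>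
     (\<forall>x\<in>Alg. \<forall>y\<in>Alg. mul x y = mul y x) \<and>
     (\<forall>x\<in>Alg. \<forall>y\<in>Alg. \<forall>z\<in>Alg. mul (mul x y) z = mul x (mul y z)) \<and>
     (\<forall>x\<in>Alg. \<forall>y\<in>Alg. \<forall>z\<in>Alg.
        (\<lambda>b. 2 * mul z (lie \<mu> x y) b) = (\<lambda>b. lie \<mu> (mul z x) y b + lie \<mu> x (mul z y) b))"

end

theory Submission
  imports Defs
begin


lemma e_in_Alg: "e b \<in> Alg"
  unfolding Alg_def supp_def e_def by auto

lemma supp_e: "supp (e b) = {b}"
  unfolding supp_def e_def by auto

lemma e_same[simp]: "e b b = 1" and e_diff: "c \<noteq> b \<Longrightarrow> e b c = 0"
  unfolding e_def by auto

lemma notsupp0: "c \<notin> supp x \<Longrightarrow> x c = 0"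
  unfolding supp_def by auto

lemma sum_single:
  assumes "finite S" "\<And>a. a \<in> S \<Longrightarrow> a \<noteq> aa \<Longrightarrow> f a = 0" "aa \<notin> S \<Longrightarrow> f aa = 0"
  shows "(\<Sum>a\<in>S. f a) = f aa"
proof (cases "aa \<in> S")
  case True
  then have "(\<Sum>a\<in>S. f a) = f aa + (\<Sum>a\<in>S-{aa}. f a)"
    using assms(1) by (simp add: sum.remove)
  also have "(\<Sum>a\<in>S-{aa}. f a) = 0" using assms(2) by (intro sum.neutral) auto
  finally show ?thesis by simp
next
  case False
  then show ?thesis using assms by (metis (no_types, lifting) sum.neutral)
qed

lemma lie_e_right: "lie \<mu> x (e b) c = (\<Sum>a\<in>supp x. x a * brb \<mu> a b c)"
  unfolding lie_def supp_e by simp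

lemma lie_e_left: "lie \<mu> (e a) y c = (\<Sum>b\<in>supp y. y b * brb \<mu> a b c)"
  unfolding lie_def supp_e by simp

lemma lie_ee: "lie \<mu> (e a) (e b) = brb \<mu> a b"
  unfolding lie_def supp_e by simp

lemma lie_right_single:
  assumes "x \<in> Alg" "\<And>a. a \<noteq> aa \<Longrightarrow> brb \<mu> a b c = 0"
  shows "lie \<mu> x (e b) c = x aa * brb \<mu> aa b c"
  unfolding lie_e_right
  by (rule sum_single) (use assms in \<open>auto simp: Alg_def notsupp0\<close>)

lemma lie_left_single:
  assumes "x \<in> Alg" "\<And>b. b \<noteq> bb \<Longrightarrow> brb \<mu> a b c = 0"
  shows "lie \<mu> (e a) x c = x bb * brb \<mu> a bb c"
  unfolding lie_e_left
  by (rule sum_single) (use assms in \<open>auto simp: Alg_def notsupp0\<close>)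

lemma rLL: "x \<in> Alg \<Longrightarrow> lie \<mu> x (e (LB n)) (LB k) = of_int (2*n - k) * x (LB (k-n))"
  apply (subst lie_right_single[where aa="LB (k-n)"], assumption)
  subgoal for a by (cases a) (auto simp: e_def)
  by (simp add: e_def)

lemma rLC: "x \<in> Alg \<Longrightarrow> lie \<mu> x (e (LB n)) CB = x (LB (-n)) * ((of_int (-n))^3 - of_int (-n))/12"
  apply (subst lie_right_single[where aa="LB (-n)"], assumption)
  subgoal for a by (cases a) (auto simp: e_def)
  by (simp add: e_def)

lemma rLM: "x \<in> Alg \<Longrightarrow> lie \<mu> x (e (LB n)) (MB k) = - (of_int (k - 2*n) + 2*\<mu>) * x (MB (k-n))"
  apply (subst lie_right_single[where aa="MB (k-n)"], assumption)
  subgoal for a by (cases a) (auto simp: e_def)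
  by (simp add: e_def)

lemma rLY: "x \<in> Alg \<Longrightarrow> lie \<mu> x (e (LB n)) (YB k) = - (of_int (k - 2*n) + 1/2 + \<mu>) * x (YB (k-n))"
  apply (subst lie_right_single[where aa="YB (k-n)"], assumption)
  subgoal for a by (cases a) (auto simp: e_def)
  by (simp add: e_def)

lemma rMM: "x \<in> Alg \<Longrightarrow> lie \<mu> x (e (MB n)) (MB k) = (of_int (2*n - k) + 2*\<mu>) * x (LB (k-n))"
  apply (subst lie_right_single[where aa="LB (k-n)"], assumption)
  subgoal for a by (cases a) (auto simp: e_def)
  by (simp add: e_def)

lemma rM0: "x \<in> Alg \<Longrightarrow> c \<notin> range MB \<Longrightarrow> lie \<mu> x (e (MB n)) c = 0"
  apply (subst lie_right_single[where aa="CB"], assumption)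
  subgoal for a by (cases a) (auto simp: e_def)
  by (simp add: e_def)

lemma rML: "x \<in> Alg \<Longrightarrow> lie \<mu> x (e (MB n)) (LB k) = 0"
  by (rule rM0) auto
lemma rMY: "x \<in> Alg \<Longrightarrow> lie \<mu> x (e (MB n)) (YB k) = 0"
  by (rule rM0) auto
lemma rMC: "x \<in> Alg \<Longrightarrow> lie \<mu> x (e (MB n)) CB = 0"
  by (rule rM0) auto

lemma rYM: "x \<in> Alg \<Longrightarrow> lie \<mu> x (e (YB n)) (MB k) = of_int (2*n + 1 - k) * x (YB (k-n-1))"
  apply (subst lie_right_single[where aa="YB (k-n-1)"], assumption)
  subgoal for a by (cases a) (auto simp: e_def)
  by (simp add: e_def)

lemma rYY: "x \<in> Alg \<Longrightarrow> lie \<mu> x (e (YB n)) (YB k) = (of_int (2*n - k) + 1/2 + \<mu>) * x (LB (k-n))"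
  apply (subst lie_right_single[where aa="LB (k-n)"], assumption)
  subgoal for a by (cases a) (auto simp: e_def)
  by (simp add: e_def)

lemma rYL: "x \<in> Alg \<Longrightarrow> lie \<mu> x (e (YB n)) (LB k) = 0"
  apply (subst lie_right_single[where aa="CB"], assumption)
  subgoal for a by (cases a) (auto simp: e_def)
  by (simp add: e_def)

lemma rYC: "x \<in> Alg \<Longrightarrow> lie \<mu> x (e (YB n)) CB = 0"
  apply (subst lie_right_single[where aa="CB"], assumption)
  subgoal for a by (cases a) (auto simp: e_def)
  by (simp add: e_def)

lemma lLL: "x \<in> Alg \<Longrightarrow> lie \<mu> (e (LB m)) x (LB k) = of_int (k - 2*m) * x (LB (k-m))"
  apply (subst lie_left_single[where bb="LB (k-m)"], assumption)
  subgoal for b by (cases b) (auto simp: e_def)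
  by (simp add: e_def)

lemma lLC: "x \<in> Alg \<Longrightarrow> lie \<mu> (e (LB m)) x CB = x (LB (-m)) * ((of_int m)^3 - of_int m)/12"
  apply (subst lie_left_single[where bb="LB (-m)"], assumption)
  subgoal for b by (cases b) (auto simp: e_def)
  by (simp add: e_def)

lemma lLM: "x \<in> Alg \<Longrightarrow> lie \<mu> (e (LB m)) x (MB k) = (of_int (k - 2*m) + 2*\<mu>) * x (MB (k-m))"
  apply (subst lie_left_single[where bb="MB (k-m)"], assumption)
  subgoal for b by (cases b) (auto simp: e_def)
  by (simp add: e_def)

lemma lLY: "x \<in> Alg \<Longrightarrow> lie \<mu> (e (LB m)) x (YB k) = (of_int (k - 2*m) + 1/2 + \<mu>) * x (YB (k-m))"
  apply (subst lie_left_single[where bb="YB (k-m)"], assumption)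
  subgoal for b by (cases b) (auto simp: e_def)
  by (simp add: e_def)


lemma cub_aux: "m + n = 0 \<Longrightarrow> (of_int m ^ 3 - of_int m) / 12 + (of_int n ^ 3 - of_int n) / 12 = (0::complex)"
proof -
  assume "m + n = 0"
  then have "n = - m" by simp
  then show ?thesis by (simp add: field_simps)
qed

lemma brb_antisym: "brb \<mu> a b c = - brb \<mu> b a c"
  apply (cases a; cases b)
  apply (auto simp: e_def algebra_simps cub_aux)
  done

lemma lie_antisym: "lie \<mu> x y c = - lie \<mu> y x c"
  unfolding lie_def
  apply (subst sum.swap)
  apply (simp add: sum_negf[symmetric])
  apply (intro sum.cong refl)
  apply (subst brb_antisym) apply simp
  done

lemma smul_e_Alg: "(\<lambda>c. a * e b c) \<in> Alg"
proof -
  have "supp (\<lambda>c. a * e b c) \<subseteq> {b}" unfolding supp_def e_def by auto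
  then show ?thesis unfolding Alg_def by (auto intro: finite_subset)
qed

locale tpa =
  fixes \<mu> :: complex and mul :: "vec \<Rightarrow> vec \<Rightarrow> vec"
  assumes tp: "transposed_poisson \<mu> mul"
begin

lemma closed: "x \<in> Alg \<Longrightarrow> y \<in> Alg \<Longrightarrow> mul x y \<in> Alg"
  using tp unfolding transposed_poisson_def by (meson)
lemma addr: "x \<in> Alg \<Longrightarrow> y \<in> Alg \<Longrightarrow> z \<in> Alg \<Longrightarrow> mul x (\<lambda>b. y b + z b) = (\<lambda>b. mul x y b + mul x z b)"
  using tp unfolding transposed_poisson_def by blast
lemma smulr: "x \<in> Alg \<Longrightarrow> y \<in> Alg \<Longrightarrow> mul x (\<lambda>b. c * y b) = (\<lambda>b. c * mul x y b)"
  using tp unfolding transposed_poisson_def by blast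
lemma comm: "x \<in> Alg \<Longrightarrow> y \<in> Alg \<Longrightarrow> mul x y = mul y x"
  using tp unfolding transposed_poisson_def by blast
lemma tpid: "x \<in> Alg \<Longrightarrow> y \<in> Alg \<Longrightarrow> z \<in> Alg \<Longrightarrow>
   (\<lambda>b. 2 * mul z (lie \<mu> x y) b) = (\<lambda>b. lie \<mu> (mul z x) y b + lie \<mu> x (mul z y) b)"
  using tp unfolding transposed_poisson_def by blast

abbreviation Q where "Q z b \<equiv> mul (e z) (e b)"

lemma QAlg: "Q z b \<in> Alg" by (simp add: closed e_in_Alg)

lemma Qcomm: "Q z b = Q b z" by (simp add: comm e_in_Alg)

lemma mul_lin1: "mul (e z) (\<lambda>c. a * e b c) = (\<lambda>c. a * Q z b c)"
  by (simp add: smulr e_in_Alg)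

lemma mul_lin2: "mul (e z) (\<lambda>c. a * e b c + d * e b' c) = (\<lambda>c. a * Q z b c + d * Q z b' c)"
  using addr[OF e_in_Alg smul_e_Alg smul_e_Alg] by (simp add: mul_lin1)

lemma mul_zero: "mul (e z) (\<lambda>c. 0) = (\<lambda>c. 0)"
  using mul_lin1[of z 0 z] by simp

lemma tpe: "2 * mul (e z) (brb \<mu> a b) c = lie \<mu> (Q z a) (e b) c + lie \<mu> (e a) (Q z b) c"
  using fun_cong[OF tpid[of "e a" "e b" "e z", OF e_in_Alg e_in_Alg e_in_Alg], of c] by (simp add: lie_ee)

lemma mul_LL: "mul (e z) (brb \<mu> (LB m) (LB n)) = (\<lambda>c. of_int (n - m) * Q z (LB (m + n)) c
        + (if m + n = 0 then (of_int m ^ 3 - of_int m) / 12 else 0) * Q z CB c)"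
  by (simp only: brb.simps mul_lin2)
lemma mul_LM: "mul (e z) (brb \<mu> (LB m) (MB n)) = (\<lambda>c. (of_int (n - m) + 2 * \<mu>) * Q z (MB (m + n)) c)"
  by (simp only: brb.simps mul_lin1)
lemma mul_LY: "mul (e z) (brb \<mu> (LB m) (YB n)) = (\<lambda>c. (of_int n + 1/2 - of_int m + \<mu>) * Q z (YB (m + n)) c)"
  by (simp only: brb.simps mul_lin1)

lemma lie_C_left: "lie \<mu> (e CB) x c = 0"
  unfolding lie_e_left by (intro sum.neutral) (auto elim: brb.elims)

lemma brb_C: "brb \<mu> CB y = (\<lambda>c. 0)"
  by (cases y) auto

lemma C1: "lie \<mu> (Q z CB) (e y) c = 0"
  using tpe[of z CB y c] by (simp add: brb_C mul_zero lie_C_left)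

lemma C2: "mul (e CB) (brb \<mu> x y) c = 0"
proof -
  have "lie \<mu> (Q CB x) (e y) c = 0" using C1 Qcomm by metis
  moreover have "lie \<mu> (e x) (Q CB y) c = 0"
  proof -
    have "Q CB y = Q y CB" by (rule Qcomm)
    then show ?thesis using lie_antisym[of \<mu> "e x" "Q CB y" c] C1[of y x c] by simp
  qed
  ultimately show ?thesis using tpe[of CB x y c] by simp
qed

lemma CL: "n \<noteq> 0 \<Longrightarrow> Q CB (LB n) c = 0"
  using C2[of "LB 0" "LB n" c] by (simp only: mul_LL) simp

lemma CL0: "Q CB (LB 0) c = 0"
  using C2[of "LB 1" "LB (-1)" c] by (simp only: mul_LL) simp

lemma CM: "Q CB (MB n) c = 0"
proof (cases "of_int n + 2*\<mu> = 0")
  case True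
  then show ?thesis using C2[of "LB 1" "MB (n-1)" c] by (simp only: mul_LM) (simp add: algebra_simps)
next
  case False
  then show ?thesis using C2[of "LB 0" "MB n" c] by (simp only: mul_LM) simp
qed

lemma CY: "Q CB (YB n) c = 0"
proof (cases "of_int n + 1/2 + \<mu> = 0")
  case True
  have "(of_int (n-1) + 1/2 - of_int 1 + \<mu>) = (of_int n + 1/2 + \<mu>) - (2::complex)" by (simp add: algebra_simps)
  with True have "(of_int (n-1) + 1/2 - of_int 1 + \<mu>) = (-2::complex)" by simp
  then show ?thesis using C2[of "LB 1" "YB (n-1)" c] by (simp only: mul_LY) simp
next
  case False
  then show ?thesis using C2[of "LB 0" "YB n" c] by (simp only: mul_LY) simp
qed

lemma CC: "Q CB CB c = 0"
  using C2[of "LB 2" "LB (-2)" c] CL0[of c] by (simp only: mul_LL) simp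

lemma CLa: "Q CB (LB n) c = 0"
  using CL CL0 by (cases "n = 0") auto

lemma Cz: "Q CB b c = 0"
  by (cases b) (auto simp: CLa CM CY CC)

lemma zC: "Q z CB c = 0"
  using Cz Qcomm by metis

end

lemma TL:
  fixes X :: "int \<Rightarrow> int \<Rightarrow> complex" and \<kappa> :: complex
  assumes H: "\<And>m n k. 2 * of_int (n-m) * X (m+n) k = - (of_int k - 2*of_int n + \<kappa>) * X m (k-n) + (of_int k - 2*of_int m + \<kappa>) * X n (k-m)"
  shows "X n k = X 0 (k-n)"
proof -
  have gen: "X p q = X 0 (q-p)" if nz: "of_int (2*p - q) - \<kappa> \<noteq> 0" for p q
  proof -
    have "2 * of_int p * X p q = - (of_int q - 2*of_int p + \<kappa>) * X 0 (q-p) + (of_int q + \<kappa>) * X p q"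
      using H[where m=0 and n=p and k=q] by simp
    then have "(of_int (2*p - q) - \<kappa>) * X p q = (of_int (2*p - q) - \<kappa>) * X 0 (q-p)"
      by (simp add: algebra_simps)
    with nz show ?thesis by simp
  qed
  show ?thesis
  proof (cases "of_int (2*n - k) - \<kappa> = 0")
    case False
    then show ?thesis by (rule gen)
  next
    case True
    then have kap: "\<kappa> = of_int (2*n-k)" by simp
    obtain n' :: int where n': "n' \<noteq> 0" "n' \<noteq> n" "n' \<noteq> 2*n"
    proof -
      consider "n = 1" | "n \<noteq> 1 \<and> n \<noteq> 0" | "n = 0" by blast
      then show ?thesis
      proof cases
        case 1 then show ?thesis using that[of 3] by simp
      next
        case 2 then show ?thesis using that[of 1] by simp
      next
        case 3 then show ?thesis using that[of 1] by simp
      qed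
    qed
    have g1: "X (n+n') (k+n') = X 0 (k-n)"
      using gen[of "n+n'" "k+n'"] n' kap by simp
    have g2: "X n' (k+n'-n) = X 0 (k-n)"
      using gen[of "n'" "k+n'-n"] n' kap by simp
    have "2 * of_int (n'-n) * X (n+n') (k+n') = - (of_int (k+n') - 2*of_int n' + \<kappa>) * X n (k+n'-n') + (of_int (k+n') - 2*of_int n + \<kappa>) * X n' (k+n'-n)"
      using H[where m=n and n="n'" and k="k+n'"] by simp
    then have "2 * of_int (n'-n) * X 0 (k-n) = - (of_int (2*n - n')) * X n k + of_int n' * X 0 (k-n)"
      using g1 g2 kap by (simp add: algebra_simps)
    then have "of_int (2*n - n') * X n k = of_int (2*n - n') * X 0 (k-n)"
      by (simp add: algebra_simps)
    moreover have "2*n - n' \<noteq> 0" using n' by simp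
    then have "(of_int (2*n - n') :: complex) \<noteq> 0" by (metis of_int_eq_0_iff)
    ultimately show ?thesis by simp
  qed
qed

lemma ZL:
  fixes X :: "int \<Rightarrow> int \<Rightarrow> complex" and \<rho> \<kappa> :: complex
  assumes H: "\<And>m n k. (2 * of_int (n-m) + \<rho>) * X (m+n) (m+k) = (of_int k - of_int m + \<kappa>) * X n k"
  shows "X n k = 0"
proof (rule ccontr)
  assume nz: "X n k \<noteq> 0"
  have z: "2 * of_int p + \<rho> = of_int q + \<kappa>" if "X p q \<noteq> 0" for p q
  proof -
    have "(2 * of_int p + \<rho>) * X p q = (of_int q + \<kappa>) * X p q" using H[where m=0 and n=p and k=q] by simp
    with that show ?thesis by simp
  qed
  obtain m :: int where m: "m \<noteq> 0" "of_int k - of_int m + \<kappa> \<noteq> 0"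
  proof (cases "of_int k - of_int 1 + \<kappa> = 0")
    case True
    then have "of_int k - of_int 2 + \<kappa> \<noteq> 0" by (simp add: algebra_simps)
    then show ?thesis using that[of 2] by simp
  next
    case False then show ?thesis using that[of 1] by simp
  qed
  have "X (m+n) (m+k) \<noteq> 0" using H[where m=m and n=n and k=k] m nz by auto
  from z[OF this] z[OF nz] have e1: "2 * of_int (m+n) + \<rho> = of_int (m+k) + \<kappa>" and e2: "2 * of_int n + \<rho> = of_int k + \<kappa>" by auto
  have "(2 * of_int (m+n) + \<rho>) - (2 * of_int n + \<rho>) = (of_int (m+k) + \<kappa>) - (of_int k + \<kappa>)"
    using e1 e2 by simp
  then have "2 * of_int m = (of_int m :: complex)" by (simp add: algebra_simps)
  then have "of_int m = (0::complex)" by simp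
  with m show False by simp
qed


context tpa begin

lemma eqLL: "2 * (of_int (n-m) * Q z (LB (m+n)) c) = lie \<mu> (Q z (LB m)) (e (LB n)) c + lie \<mu> (e (LB m)) (Q z (LB n)) c"
  using tpe[of z "LB m" "LB n" c] by (simp only: mul_LL zC) simp
lemma eqLM: "2 * ((of_int (n-m) + 2*\<mu>) * Q z (MB (m+n)) c) = lie \<mu> (Q z (LB m)) (e (MB n)) c + lie \<mu> (e (LB m)) (Q z (MB n)) c"
  using tpe[of z "LB m" "MB n" c] by (simp only: mul_LM)
lemma eqLY: "2 * ((of_int n + 1/2 - of_int m + \<mu>) * Q z (YB (m+n)) c) = lie \<mu> (Q z (LB m)) (e (YB n)) c + lie \<mu> (e (LB m)) (Q z (YB n)) c"
  using tpe[of z "LB m" "YB n" c] by (simp only: mul_LY)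

lemma F_LL0: "Q z (LB n) (LB k) = Q z (LB 0) (LB (k-n))"
proof (rule TL[where \<kappa>=0])
  fix m n k
  show "2 * of_int (n-m) * Q z (LB (m+n)) (LB k) = - (of_int k - 2*of_int n + 0) * Q z (LB m) (LB (k-n)) + (of_int k - 2*of_int m + 0) * Q z (LB n) (LB (k-m))"
    using eqLL[of n m z "LB k"] by (simp add: rLL lLL QAlg algebra_simps)
qed

lemma F_LM: "Q z (LB n) (MB k) = Q z (LB 0) (MB (k-n))"
proof (rule TL[where \<kappa>="2*\<mu>"])
  fix m n k
  show "2 * of_int (n-m) * Q z (LB (m+n)) (MB k) = - (of_int k - 2*of_int n + 2*\<mu>) * Q z (LB m) (MB (k-n)) + (of_int k - 2*of_int m + 2*\<mu>) * Q z (LB n) (MB (k-m))"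
    using eqLL[of n m z "MB k"] by (simp add: rLM lLM QAlg algebra_simps)
qed

lemma F_LY: "Q z (LB n) (YB k) = Q z (LB 0) (YB (k-n))"
proof (rule TL[where \<kappa>="1/2+\<mu>"])
  fix m n k
  show "2 * of_int (n-m) * Q z (LB (m+n)) (YB k) = - (of_int k - 2*of_int n + (1/2+\<mu>)) * Q z (LB m) (YB (k-n)) + (of_int k - 2*of_int m + (1/2+\<mu>)) * Q z (LB n) (YB (k-m))"
    using eqLL[of n m z "YB k"] by (simp add: rLY lLY QAlg algebra_simps)
qed

lemma LL_C: "2 * (of_int (n-m) * Q z (LB (m+n)) CB) = Q z (LB m) (LB (-n)) * ((of_int (-n))^3 - of_int (-n))/12 + Q z (LB n) (LB (-m)) * ((of_int m)^3 - of_int m)/12"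
  using eqLL[of n m z CB] by (simp add: rLC lLC QAlg)

end

context tpa begin

lemma h_eq: "2 * (of_int (s-2*m) * Q z (LB s) CB) = Q z (LB 0) (LB (-s)) * ((of_int (m-s))^3 - of_int (m-s))/12 + Q z (LB 0) (LB (-s)) * ((of_int m)^3 - of_int m)/12"
proof -
  have "2 * (of_int ((s-m)-m) * Q z (LB (m+(s-m))) CB) = Q z (LB m) (LB (-(s-m))) * ((of_int (-(s-m)))^3 - of_int (-(s-m)))/12 + Q z (LB (s-m)) (LB (-m)) * ((of_int m)^3 - of_int m)/12"
    by (rule LL_C)
  moreover have "Q z (LB m) (LB (-(s-m))) = Q z (LB 0) (LB (-s))"
    using F_LL0[where z=z and n=m and k="-(s-m)"] by simp
  moreover have "Q z (LB (s-m)) (LB (-m)) = Q z (LB 0) (LB (-s))"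
    using F_LL0[where z=z and n="s-m" and k="-m"] by simp
  ultimately show ?thesis by (simp add: algebra_simps)
qed

lemma h0: "Q z (LB 0) (LB j) = 0"
proof -
  define s where "s = -j"
  define H where "H = Q z (LB 0) (LB (-s))"
  define W where "W = Q z (LB s) CB"
  have eq: "2 * (of_int (s-2*m) * W) = H * ((of_int (m-s))^3 - of_int (m-s))/12 + H * ((of_int m)^3 - of_int m)/12" for m
    unfolding H_def W_def by (rule h_eq)
  have "H = 0"
  proof (cases "s \<ge> 0")
    case True
    have e1: "2 * (of_int (s+2) * W) = H * ((of_int (-1-s))^3 - of_int (-1-s))/12 + H * ((of_int (-1))^3 - of_int (-1))/12"
      using eq[of "-1"] by simp
    have e2: "2 * (of_int (s+4) * W) = H * ((of_int (-2-s))^3 - of_int (-2-s))/12 + H * ((of_int (-2))^3 - of_int (-2))/12"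
      using eq[of "-2"] by simp
    have "H * of_int ((s+2)*(s+3)*(s+4)) = 12 * (of_int (s+4) * (H * ((of_int (-1-s))^3 - of_int (-1-s))/12 + H * ((of_int (-1))^3 - of_int (-1))/12)
         - of_int (s+2) * (H * ((of_int (-2-s))^3 - of_int (-2-s))/12 + H * ((of_int (-2))^3 - of_int (-2))/12))"
      by (simp add: field_simps power3_eq_cube; simp add: algebra_simps)
    also have "\<dots> = 0" unfolding e1[symmetric] e2[symmetric] by (simp add: algebra_simps)
    finally have "H * of_int ((s+2)*(s+3)*(s+4)) = 0" .
    moreover have "(s+2)*(s+3)*(s+4) \<noteq> 0" using True by simp
    ultimately show ?thesis by (metis mult_eq_0_iff of_int_eq_0_iff)
  next
    case False
    have e1: "2 * (of_int (s-2) * W) = H * ((of_int (1-s))^3 - of_int (1-s))/12 + H * ((of_int 1)^3 - of_int 1)/12"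
      using eq[of 1] by simp
    have e2: "2 * (of_int (s-4) * W) = H * ((of_int (2-s))^3 - of_int (2-s))/12 + H * ((of_int 2)^3 - of_int 2)/12"
      using eq[of 2] by simp
    have "H * of_int ((s-2)*(s-3)*(s-4)) = 12 * (of_int (s-2) * (H * ((of_int (2-s))^3 - of_int (2-s))/12 + H * ((of_int 2)^3 - of_int 2)/12)
         - of_int (s-4) * (H * ((of_int (1-s))^3 - of_int (1-s))/12 + H * ((of_int 1)^3 - of_int 1)/12))"
      by (simp add: field_simps power3_eq_cube; simp add: algebra_simps)
    also have "\<dots> = 0" unfolding e1[symmetric] e2[symmetric] by (simp add: algebra_simps)
    finally have "H * of_int ((s-2)*(s-3)*(s-4)) = 0" .
    moreover have "(s-2)*(s-3)*(s-4) \<noteq> 0" using False by simp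
    ultimately show ?thesis by (metis mult_eq_0_iff of_int_eq_0_iff)
  qed
  then show ?thesis unfolding H_def s_def by simp
qed

end

context tpa begin

lemma F_LL: "Q z (LB n) (LB k) = 0"
  using F_LL0 h0 by metis

lemma F_LC: "Q z (LB s) CB = 0"
proof -
  obtain m :: int where m: "s - 2*m \<noteq> 0"
  proof (cases "s = 0")
    case True then show ?thesis using that[of 1] by simp
  next
    case False then show ?thesis using that[of 0] by simp
  qed
  have "2 * (of_int (s-2*m) * Q z (LB s) CB) = 0"
    using h_eq[of s m z] h0 by simp
  moreover have "(of_int (s-2*m) :: complex) \<noteq> 0" using m by (metis of_int_eq_0_iff)
  ultimately show ?thesis by simp
qed

lemma F_ML: "Q z (MB n) (LB k) = 0"
proof (rule ZL[where \<rho>="4*\<mu>" and \<kappa>=0])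
  fix m n k
  show "(2 * of_int (n-m) + 4*\<mu>) * Q z (MB (m+n)) (LB (m+k)) = (of_int k - of_int m + 0) * Q z (MB n) (LB k)"
    using eqLM[of n m z "LB (m+k)"] by (simp add: rML lLL QAlg algebra_simps)
qed

lemma F_MM: "Q z (MB n) (MB k) = 0"
proof (rule ZL[where \<rho>="4*\<mu>" and \<kappa>="2*\<mu>"])
  fix m n k
  show "(2 * of_int (n-m) + 4*\<mu>) * Q z (MB (m+n)) (MB (m+k)) = (of_int k - of_int m + 2*\<mu>) * Q z (MB n) (MB k)"
    using eqLM[of n m z "MB (m+k)"] by (simp add: rMM lLM QAlg F_LL algebra_simps)
qed

lemma F_MY: "Q z (MB n) (YB k) = 0"
proof (rule ZL[where \<rho>="4*\<mu>" and \<kappa>="1/2+\<mu>"])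
  fix m n k
  show "(2 * of_int (n-m) + 4*\<mu>) * Q z (MB (m+n)) (YB (m+k)) = (of_int k - of_int m + (1/2+\<mu>)) * Q z (MB n) (YB k)"
    using eqLM[of n m z "YB (m+k)"] by (simp add: rMY lLY QAlg algebra_simps)
qed

lemma F_MC: "Q z (MB s) CB = 0"
proof -
  have e: "2 * ((of_int (s-2*m) + 2*\<mu>) * Q z (MB s) CB) = 0" for m
    using eqLM[of "s-m" m z CB] by (simp add: rMC lLC QAlg F_ML algebra_simps)
  show ?thesis
  proof (cases "of_int s + 2*\<mu> = 0")
    case True
    have "of_int (s-2*1) + 2*\<mu> = (of_int s + 2*\<mu>) - 2" by (simp add: algebra_simps)
    with True have hm2: "of_int (s-2*1) + 2*\<mu> = -2" by simp
    show ?thesis using e[of 1] by (simp only: hm2) simp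
  next
    case False
    then show ?thesis using e[of 0] by simp
  qed
qed

lemma F_YL: "Q z (YB n) (LB k) = 0"
proof (rule ZL[where \<rho>="1+2*\<mu>" and \<kappa>=0])
  fix m n k
  show "(2 * of_int (n-m) + (1+2*\<mu>)) * Q z (YB (m+n)) (LB (m+k)) = (of_int k - of_int m + 0) * Q z (YB n) (LB k)"
    using eqLY[of n m z "LB (m+k)"] by (simp add: rYL lLL QAlg algebra_simps)
qed

lemma F_YY: "Q z (YB n) (YB k) = 0"
proof (rule ZL[where \<rho>="1+2*\<mu>" and \<kappa>="1/2+\<mu>"])
  fix m n k
  show "(2 * of_int (n-m) + (1+2*\<mu>)) * Q z (YB (m+n)) (YB (m+k)) = (of_int k - of_int m + (1/2+\<mu>)) * Q z (YB n) (YB k)"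
    using eqLY[of n m z "YB (m+k)"] by (simp add: rYY lLY QAlg F_LL algebra_simps)
qed

lemma F_YC: "Q z (YB s) CB = 0"
proof -
  have e: "2 * ((of_int (s-2*m) + 1/2 + \<mu>) * Q z (YB s) CB) = 0" for m
    using eqLY[of "s-m" m z CB] by (simp add: rYC lLC QAlg F_YL algebra_simps)
  show ?thesis
  proof (cases "of_int s + 1/2 + \<mu> = 0")
    case True
    have "of_int (s-2*1) + 1/2 + \<mu> = (of_int s + 1/2 + \<mu>) - 2" by (simp add: algebra_simps)
    with True have "of_int (s-2*1) + 1/2 + \<mu> = -2" by simp
    then show ?thesis using e[of 1] by simp
  next
    case False
    then show ?thesis using e[of 0] by simp
  qed
qed

lemma F_YM: "Q z (YB n) (MB k) = Q z (LB 0) (YB (k-n-1))"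
proof -
  define X where "X p q = Q z (YB p) (MB q) - Q z (LB 0) (YB (q-p-1))" for p q
  have "X n k = 0"
  proof (rule ZL[where \<rho>="1+2*\<mu>" and \<kappa>="2*\<mu>"])
    fix m n k
    have a: "Q z (LB m) (YB (m+k-n-1)) = Q z (LB 0) (YB (k-n-1))"
    proof -
      have eqi: "(m+k-n-1) - m = k-n-1" by simp
      show ?thesis using F_LY[where z=z and n=m and k="m+k-n-1"] eqi by metis
    qed
    have "2 * ((of_int n + 1/2 - of_int m + \<mu>) * Q z (YB (m+n)) (MB (m+k))) =
       of_int (2*n + 1 - (m+k)) * Q z (LB m) (YB (m+k-n-1)) + (of_int (m+k - 2*m) + 2*\<mu>) * Q z (YB n) (MB (m+k-m))"
      using eqLY[of n m z "MB (m+k)"] by (simp add: rYM lLM QAlg)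
    then have "2 * ((of_int n + 1/2 - of_int m + \<mu>) * Q z (YB (m+n)) (MB (m+k))) =
       of_int (2*n + 1 - (m+k)) * Q z (LB 0) (YB (k-n-1)) + (of_int (k - m) + 2*\<mu>) * Q z (YB n) (MB k)"
      using a by simp
    moreover have "m + k - (m + n) - 1 = k - n - 1" by simp
    ultimately show "(2 * of_int (n-m) + (1+2*\<mu>)) * X (m+n) (m+k) = (of_int k - of_int m + 2*\<mu>) * X n k"
      unfolding X_def by (simp add: algebra_simps)
  qed
  then show ?thesis unfolding X_def by simp
qed

end

context tpa begin

lemma LLM: "Q (LB m) (LB n) (MB k) = Q (LB 0) (LB 0) (MB (k-m-n))"
proof -
  have "Q (LB m) (LB n) (MB k) = Q (LB m) (LB 0) (MB (k-n))" by (rule F_LM)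
  also have "\<dots> = Q (LB 0) (LB m) (MB (k-n))" by (simp add: Qcomm)
  also have "\<dots> = Q (LB 0) (LB 0) (MB (k-n-m))" by (rule F_LM)
  finally show ?thesis by (simp add: algebra_simps)
qed

lemma LLY: "Q (LB m) (LB n) (YB k) = Q (LB 0) (LB 0) (YB (k-m-n))"
proof -
  have "Q (LB m) (LB n) (YB k) = Q (LB m) (LB 0) (YB (k-n))" by (rule F_LY)
  also have "\<dots> = Q (LB 0) (LB m) (YB (k-n))" by (simp add: Qcomm)
  also have "\<dots> = Q (LB 0) (LB 0) (YB (k-n-m))" by (rule F_LY)
  finally show ?thesis by (simp add: algebra_simps)
qed

lemma LYM: "Q (LB m) (YB n) (MB k) = Q (LB 0) (LB 0) (YB (k-m-n-1))"
proof -
  have "Q (LB m) (YB n) (MB k) = Q (LB m) (LB 0) (YB (k-n-1))" by (rule F_YM)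
  also have "\<dots> = Q (LB 0) (LB m) (YB (k-n-1))" by (simp add: Qcomm)
  also have "\<dots> = Q (LB 0) (LB 0) (YB (k-n-1-m))" by (rule F_LY)
  finally show ?thesis by (simp add: algebra_simps)
qed

lemma YYM: "Q (YB m) (YB n) (MB k) = 0"
proof -
  have "Q (YB m) (YB n) (MB k) = Q (YB m) (LB 0) (YB (k-n-1))" by (rule F_YM)
  also have "\<dots> = Q (LB 0) (YB m) (YB (k-n-1))" by (simp add: Qcomm)
  also have "\<dots> = 0" by (rule F_YY)
  finally show ?thesis .
qed

lemma LM0: "Q z (MB n) c = 0"
  by (cases c) (auto simp: F_ML F_MM F_MY F_MC)

lemma M0: "Q (MB n) b c = 0"
  using LM0 Qcomm by metis

lemma YY0: "Q (YB m) (YB n) c = 0"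
  by (cases c) (auto simp: F_YL F_YY F_YC YYM)

end

theorem mainTheorem8:
  fixes \<mu> :: complex and mul :: "vec \<Rightarrow> vec \<Rightarrow> vec"
  assumes "(\<forall>k::int. \<mu> \<noteq> of_int k / 2) \<or> \<mu> \<in> \<int>"
    and "transposed_poisson \<mu> mul"
  shows "\<exists>\<alpha> \<beta> :: int \<Rightarrow> complex.
     finite {t. \<alpha> t \<noteq> 0} \<and> finite {t. \<beta> t \<noteq> 0} \<and>
     (\<forall>m n. mul (e (LB m)) (e (LB n)) =
        (\<lambda>b. case b of MB k \<Rightarrow> \<alpha> (k - m - n) | YB k \<Rightarrow> \<beta> (k - m - n) | _ \<Rightarrow> 0)) \<and>
     (\<forall>m n. mul (e (LB m)) (e (YB n)) =
        (\<lambda>b. case b of MB k \<Rightarrow> \<beta> (k - m - n - 1) | _ \<Rightarrow> 0)) \<and>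
     (\<forall>a b. \<not> (\<exists>m n. a = LB m \<and> b = LB n) \<and>
            \<not> (\<exists>m n. a = LB m \<and> b = YB n) \<and>
            \<not> (\<exists>m n. a = YB n \<and> b = LB m) \<longrightarrow> mul (e a) (e b) = (\<lambda>c. 0))"
proof -
  interpret tpa \<mu> mul by unfold_locales (rule assms(2))
  define \<alpha> where "\<alpha> t = mul (e (LB 0)) (e (LB 0)) (MB t)" for t
  define \<beta> where "\<beta> t = mul (e (LB 0)) (e (LB 0)) (YB t)" for t
  have fin: "finite (supp (mul (e (LB 0)) (e (LB 0))))" using QAlg unfolding Alg_def by simp
  have f1: "finite {t. \<alpha> t \<noteq> 0}"
  proof -
    have "{t. \<alpha> t \<noteq> 0} = MB -` supp (mul (e (LB 0)) (e (LB 0)))" unfolding \<alpha>_def supp_def by auto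
    moreover have "inj MB" by (simp add: inj_def)
    ultimately show ?thesis using finite_vimageI[OF fin] by simp
  qed
  have f2: "finite {t. \<beta> t \<noteq> 0}"
  proof -
    have "{t. \<beta> t \<noteq> 0} = YB -` supp (mul (e (LB 0)) (e (LB 0)))" unfolding \<beta>_def supp_def by auto
    moreover have "inj YB" by (simp add: inj_def)
    ultimately show ?thesis using finite_vimageI[OF fin] by simp
  qed
  have LLM': "mul (e (LB m)) (e (LB n)) (MB k) = \<alpha> (k-m-n)" for m n k
    unfolding \<alpha>_def by (rule LLM)
  have LLY': "mul (e (LB m)) (e (LB n)) (YB k) = \<beta> (k-m-n)" for m n k
    unfolding \<beta>_def by (rule LLY)
  have LYM': "mul (e (LB m)) (e (YB n)) (MB k) = \<beta> (k-m-n-1)" for m n k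
    unfolding \<beta>_def by (rule LYM)
  have g1: "mul (e (LB m)) (e (LB n)) =
        (\<lambda>b. case b of MB k \<Rightarrow> \<alpha> (k - m - n) | YB k \<Rightarrow> \<beta> (k - m - n) | _ \<Rightarrow> 0)" for m n
  proof
    fix b show "mul (e (LB m)) (e (LB n)) b = (case b of MB k \<Rightarrow> \<alpha> (k - m - n) | YB k \<Rightarrow> \<beta> (k - m - n) | _ \<Rightarrow> 0)"
      by (cases b) (simp_all only: LLM' LLY' F_LL F_LC basis.case)
  qed
  have g2: "mul (e (LB m)) (e (YB n)) =
        (\<lambda>b. case b of MB k \<Rightarrow> \<beta> (k - m - n - 1) | _ \<Rightarrow> 0)" for m n
  proof
    fix b show "mul (e (LB m)) (e (YB n)) b = (case b of MB k \<Rightarrow> \<beta> (k - m - n - 1) | _ \<Rightarrow> 0)"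
      by (cases b) (simp_all only: LYM' F_YL F_YY F_YC basis.case)
  qed
  have g3: "mul (e a) (e b) = (\<lambda>c. 0)"
    if "\<not> (\<exists>m n. a = LB m \<and> b = LB n)" "\<not> (\<exists>m n. a = LB m \<and> b = YB n)" "\<not> (\<exists>m n. a = YB n \<and> b = LB m)" for a b
  proof
    fix c show "mul (e a) (e b) c = 0"
      using that by (cases a; cases b) (auto simp: LM0 M0 YY0 Cz zC)
  qed
  show ?thesis using f1 f2 g1 g2 g3 by blast
qed

end
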